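(* Let $D$ be a probability distribution on a finite set $\Omega$ with $\mathrm{cp}(D)\le1/N$ for a positive integer $N$, and let $g:\Omega\to\mathbb R$. Then there is a set $T\subseteq\Omega$ of size $N$ such that $\mathbb E_{x\in T}g(x)^2\ge(\mathbb E\,g(D))^2/4$.
   Context: $\mathrm{cp}(D)$ is the collision probability of $D$, i.e. the probability that two independent samples from $D$ are equal. $\mathbb E_{x\in T}$ denotes the uniform average over $T$, and $\mathbb E\,g(D)$ is the expectation of $g$ under $D$. *)

theory Defs
  imports "HOL-Probability.Probability"
begin

definition cp :: "'a pmf \<Rightarrow> real" where
  "cp D = measure_pmf.prob (pair_pmf D D) {z. fst z = snd z}"

end

theory Submission
  imports Defs "HOL-Analysis.Analysis"
begin

lemma cp_sum:
  assumes "finite \<Omega>" "set_pmf D \<subseteq> \<Omega>"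
  shows "cp D = (\<Sum>x\<in>\<Omega>. (pmf D x)^2)"
proof -
  have fin: "finite (set_pmf D)" using assms finite_subset by blast
  have "cp D = measure (measure_pmf (pair_pmf D D)) ({z. fst z = snd z} \<inter> set_pmf (pair_pmf D D))"
    unfolding cp_def by (rule measure_Int_set_pmf[symmetric])
  also have "{z. fst z = snd z} \<inter> set_pmf (pair_pmf D D) = (\<lambda>x. (x,x)) ` set_pmf D"
    by auto
  also have "measure (measure_pmf (pair_pmf D D)) ((\<lambda>x. (x,x)) ` set_pmf D)
      = sum (pmf (pair_pmf D D)) ((\<lambda>x. (x,x)) ` set_pmf D)"
    using fin by (simp add: measure_measure_pmf_finite)
  also have "\<dots> = (\<Sum>x\<in>set_pmf D. (pmf D x)^2)"
    by (subst sum.reindex) (auto simp: inj_on_def pmf_pair power2_eq_square)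
  also have "\<dots> = (\<Sum>x\<in>\<Omega>. (pmf D x)^2)"
    using assms by (intro sum.mono_neutral_left) (auto simp: set_pmf_iff)
  finally show ?thesis .
qed

theorem lemma8p4:
  fixes \<Omega> :: "'a set" and D :: "'a pmf" and N :: nat and g :: "'a \<Rightarrow> real"
  assumes "finite \<Omega>" and "set_pmf D \<subseteq> \<Omega>" and "N > 0"
    and "cp D \<le> 1 / real N"
  shows "\<exists>T. T \<subseteq> \<Omega> \<and> card T = N \<and>
           (\<Sum>x\<in>T. (g x)^2) / real (card T) \<ge> (measure_pmf.expectation D g)^2 / 4"
proof -
  note fin = assms(1)
  define p where "p = pmf D"
  have p0: "\<And>x. p x \<ge> 0" by (simp add: p_def)
  have cpS: "(\<Sum>x\<in>\<Omega>. (p x)^2) \<le> 1 / real N"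
    using cp_sum[OF assms(1,2)] assms(4) by (simp add: p_def)
  have sum1: "(\<Sum>x\<in>\<Omega>. p x) = 1"
  proof -
    have "(\<Sum>x\<in>\<Omega>. p x) = measure (measure_pmf D) \<Omega>"
      using fin by (simp add: measure_measure_pmf_finite p_def)
    also have "\<dots> = 1" using assms(2)
      by (simp add: measure_pmf.prob_eq_1 AE_measure_pmf_iff subset_eq)
    finally show ?thesis .
  qed
  have cardN: "N \<le> card \<Omega>"
  proof -
    have "1 = (\<Sum>x\<in>\<Omega>. p x)^2" using sum1 by simp
    also have "\<dots> \<le> (\<Sum>x\<in>\<Omega>. (p x)^2) * card \<Omega>" by (rule sum_squared_le_sum_of_squares)
    also have "\<dots> \<le> (1 / real N) * card \<Omega>" using cpS by (intro mult_right_mono) auto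
    finally have "real N \<le> card \<Omega>" using assms(3) by (simp add: field_simps)
    thus ?thesis by simp
  qed
  define S where "S = {T. T \<subseteq> \<Omega> \<and> card T = N}"
  define f where "f T = (\<Sum>x\<in>T. (g x)^2)" for T
  have Sfin: "finite S" unfolding S_def using fin
    by (rule rev_finite_subset[OF finite_Pow_iff[THEN iffD2]]) auto
  have Sne: "S \<noteq> {}" unfolding S_def using obtain_subset_with_card_n[OF cardN] by blast
  obtain T where TS: "T \<in> S" and Tmax: "\<And>T'. T' \<in> S \<Longrightarrow> f T' \<le> f T"
  proof -
    have "Max (f ` S) \<in> f ` S" using Sfin Sne by simp
    then obtain T where "T \<in> S" "f T = Max (f ` S)" by auto
    moreover have "\<And>T'. T' \<in> S \<Longrightarrow> f T' \<le> Max (f ` S)" using Sfin by simp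
    ultimately show ?thesis using that by metis
  qed
  have TO: "T \<subseteq> \<Omega>" and cT: "card T = N" using TS by (auto simp: S_def)
  have Tfin: "finite T" using TO fin finite_subset by blast
  define A where "A = f T / real N"
  have A0: "A \<ge> 0" unfolding A_def f_def by (simp add: sum_nonneg)
  have swap: "(g y)^2 \<le> (g x)^2" if x: "x \<in> T" and y: "y \<in> \<Omega> - T" for x y
  proof -
    let ?T' = "insert y (T - {x})"
    have "card T > 0" using x Tfin card_gt_0_iff by blast
    hence "?T' \<in> S" using x y TO cT Tfin by (auto simp: S_def card_insert_if)
    hence "f ?T' \<le> f T" by (rule Tmax)
    moreover have "f ?T' = (g y)^2 + f T - (g x)^2"
      using x y Tfin unfolding f_def by (simp add: sum_diff1)
    ultimately show ?thesis by simp
  qed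
  have outside: "(g y)^2 \<le> A" if y: "y \<in> \<Omega> - T" for y
  proof -
    have "real N * (g y)^2 = (\<Sum>x\<in>T. (g y)^2)" using cT by simp
    also have "\<dots> \<le> f T" unfolding f_def using swap[OF _ y] by (intro sum_mono) auto
    finally show ?thesis unfolding A_def using assms(3) by (simp add: field_simps)
  qed
  have E: "measure_pmf.expectation D g = (\<Sum>x\<in>\<Omega>. g x * p x)"
    using assms(2) fin by (subst integral_measure_pmf_real[where A=\<Omega>]) (auto simp: p_def)
  have split: "(\<Sum>x\<in>\<Omega>. g x * p x) = (\<Sum>x\<in>T. p x * g x) + (\<Sum>x\<in>\<Omega>-T. p x * g x)"
    using sum.subset_diff[OF TO fin, of "\<lambda>x. g x * p x"] by (simp add: mult.commute add.commute)
  have P1: "\<bar>\<Sum>x\<in>T. p x * g x\<bar> \<le> sqrt A"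
  proof -
    have "(\<Sum>x\<in>T. p x * g x)^2 \<le> (\<Sum>x\<in>T. (p x)^2) * (\<Sum>x\<in>T. (g x)^2)"
      by (rule Cauchy_Schwarz_ineq_sum)
    also have "\<dots> \<le> (1 / real N) * f T"
    proof (rule mult_mono)
      have "(\<Sum>x\<in>T. (p x)^2) \<le> (\<Sum>x\<in>\<Omega>. (p x)^2)"
        using TO fin by (intro sum_mono2) auto
      thus "(\<Sum>x\<in>T. (p x)^2) \<le> 1 / real N" using cpS by linarith
    qed (simp_all add: f_def sum_nonneg)
    also have "\<dots> = A" by (simp add: A_def)
    finally have "(\<Sum>x\<in>T. p x * g x)^2 \<le> A" .
    from real_sqrt_le_mono[OF this] show ?thesis by simp
  qed
  have P2: "\<bar>\<Sum>x\<in>\<Omega>-T. p x * g x\<bar> \<le> sqrt A"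
  proof -
    have "\<bar>\<Sum>x\<in>\<Omega>-T. p x * g x\<bar> \<le> (\<Sum>x\<in>\<Omega>-T. \<bar>p x * g x\<bar>)" by (rule sum_abs)
    also have "\<dots> \<le> (\<Sum>x\<in>\<Omega>-T. p x * sqrt A)"
    proof (rule sum_mono)
      fix x assume x: "x \<in> \<Omega> - T"
      have "\<bar>g x\<bar> \<le> sqrt A" using real_sqrt_le_mono[OF outside[OF x]] by simp
      thus "\<bar>p x * g x\<bar> \<le> p x * sqrt A" using p0[of x] by (simp add: abs_mult mult_left_mono)
    qed
    also have "\<dots> = (\<Sum>x\<in>\<Omega>-T. p x) * sqrt A" by (simp add: sum_distrib_right)
    also have "\<dots> \<le> 1 * sqrt A"
    proof (rule mult_right_mono)
      have "(\<Sum>x\<in>\<Omega>-T. p x) \<le> (\<Sum>x\<in>\<Omega>. p x)" using fin p0 by (intro sum_mono2) auto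
      thus "(\<Sum>x\<in>\<Omega>-T. p x) \<le> 1" using sum1 by simp
    qed (simp add: A0)
    finally show ?thesis by simp
  qed
  have "\<bar>measure_pmf.expectation D g\<bar> \<le> 2 * sqrt A"
    using E split P1 P2 by linarith
  hence "\<bar>measure_pmf.expectation D g\<bar>^2 \<le> (2 * sqrt A)^2"
    by (rule power_mono) simp
  hence "(measure_pmf.expectation D g)^2 \<le> (2 * sqrt A)^2" by simp
  also have "\<dots> = 4 * A" using A0 by (simp add: power_mult_distrib)
  finally have "(measure_pmf.expectation D g)^2 / 4 \<le> A" by simp
  thus ?thesis using TO cT unfolding A_def f_def by auto
qed

end
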